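(* Let $\boldsymbol z,\boldsymbol m\in\{0,1\}^n$ and $\boldsymbol y\in\overline{\mathbb R}^n$ with $y_i\in\mathbb R$ if $m_i=1$ and $y_i\in\{+\infty,-\infty\}$ if $m_i=0$. Let $\mathcal N_{11}=\{j:z_j=m_j=1\}$, $n_{11}=|\mathcal N_{11}|$, and write $\mathcal N_{11}=\{j_1,\dots,j_{n_{11}}\}$ with $\mathrm{rank}_{j_1}(\boldsymbol y)<\dots<\mathrm{rank}_{j_{n_{11}}}(\boldsymbol y)$. For an integer $0\le L\le n_{11}$, $c\in\mathbb R$ and $\kappa>0$, let $\mathcal H_L=\{\boldsymbol\delta\in\mathbb R^n:\sum_{i\in\mathcal N_{11}}\mathbf 1(\delta_i>c)\le L\}$, $\mathcal A_L=\{j_{n_{11}-L+1},\dots,j_{n_{11}}\}$ if $L\ge1$ and $\mathcal A_0=\emptyset$, $\gamma=\max\{y_i:z_i=m_i=1\}-\min\{y_i:z_i=0,m_i=1\}+\kappa$, and $\boldsymbol\eta_L\in\mathbb R^n$ with $\eta_{L,i}=\gamma$ for $i\in\mathcal A_L$ and $\eta_{L,i}=c$ otherwise. Then $$\inf_{\boldsymbol\delta\in\mathcal H_L}t_{\mathrm R,\phi}(\boldsymbol z,\boldsymbol y-\boldsymbol z\circ\boldsymbol m\circ\boldsymbol\delta)=t_{\mathrm R,\phi}(\boldsymbol z,\boldsymbol y-\boldsymbol z\circ\boldsymbol m\circ\boldsymbol\eta_L)$$ for either the rank-sum or the Mann–Whitney-type statistic.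
   Context: $\overline{\mathbb R}=\mathbb R\cup\{\pm\infty\}$; $\circ$ is the entrywise product (with $0\cdot\delta_i=0$, so coordinates with $z_im_i=0$ are unchanged). For $1\le i,j\le n$ and $y,y'\in\overline{\mathbb R}$, $\psi_{i,j}(y,y')=\mathbf 1\{y>y'\}+\mathbf 1\{y=y'\}\mathbf 1\{i\ge j\}$; $\mathrm{rank}_i(\boldsymbol y)=\sum_{j=1}^n\psi_{i,j}(y_i,y_j)$. $\phi$ is a fixed nondecreasing real function on the nonnegative integers. Rank-sum statistic $t_{\mathrm R,\phi}(\boldsymbol z,\boldsymbol y)=\sum_iz_i\phi(\mathrm{rank}_i(\boldsymbol y))$; Mann–Whitney-type statistic $t_{\mathrm R,\phi}(\boldsymbol z,\boldsymbol y)=\sum_iz_i\phi(\sum_j(1-z_j)\psi_{i,j}(y_i,y_j))$. *)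

theory Defs
  imports "HOL-Library.Extended_Real"
begin

text \<open>Units are indexed by 1..n. Treatment and missingness indicators are booleans
  (True = 1, False = 0).\<close>

definition psi :: "nat \<Rightarrow> nat \<Rightarrow> ereal \<Rightarrow> ereal \<Rightarrow> nat" where
  "psi i j y y' = (if y > y' then 1 else 0) + (if y = y' \<and> i \<ge> j then 1 else 0)"

definition rnk :: "nat \<Rightarrow> (nat \<Rightarrow> ereal) \<Rightarrow> nat \<Rightarrow> nat" where
  "rnk n y i = (\<Sum>j\<in>{1..n}. psi i j (y i) (y j))"

definition t_rank :: "nat \<Rightarrow> (nat \<Rightarrow> real) \<Rightarrow> (nat \<Rightarrow> bool) \<Rightarrow> (nat \<Rightarrow> ereal) \<Rightarrow> real" where
  "t_rank n \<phi> z y = (\<Sum>i\<in>{1..n}. (if z i then 1 else 0) * \<phi> (rnk n y i))"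

definition t_mw :: "nat \<Rightarrow> (nat \<Rightarrow> real) \<Rightarrow> (nat \<Rightarrow> bool) \<Rightarrow> (nat \<Rightarrow> ereal) \<Rightarrow> real" where
  "t_mw n \<phi> z y = (\<Sum>i\<in>{1..n}. (if z i then 1 else 0) *
      \<phi> (\<Sum>j\<in>{1..n}. (if z j then 0 else 1) * psi i j (y i) (y j)))"

definition shift :: "(nat \<Rightarrow> bool) \<Rightarrow> (nat \<Rightarrow> bool) \<Rightarrow> (nat \<Rightarrow> ereal) \<Rightarrow> (nat \<Rightarrow> real) \<Rightarrow> nat \<Rightarrow> ereal" where
  "shift z m y \<delta> i = (if z i \<and> m i then y i - ereal (\<delta> i) else y i)"

definition N11 :: "nat \<Rightarrow> (nat \<Rightarrow> bool) \<Rightarrow> (nat \<Rightarrow> bool) \<Rightarrow> nat set" where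
  "N11 n z m = {j\<in>{1..n}. z j \<and> m j}"

definition N01 :: "nat \<Rightarrow> (nat \<Rightarrow> bool) \<Rightarrow> (nat \<Rightarrow> bool) \<Rightarrow> nat set" where
  "N01 n z m = {j\<in>{1..n}. \<not> z j \<and> m j}"

definition H :: "nat \<Rightarrow> (nat \<Rightarrow> bool) \<Rightarrow> (nat \<Rightarrow> bool) \<Rightarrow> nat \<Rightarrow> real \<Rightarrow> (nat \<Rightarrow> real) set" where
  "H n z m L c = {\<delta>. card {i\<in>N11 n z m. \<delta> i > c} \<le> L}"

text \<open>\<open>A_L\<close>: the \<open>L\<close> elements of \<open>N11\<close> with the largest ranks \<open>rank_j(y)\<close>, i.e. those
  exceeded in rank by fewer than \<open>L\<close> elements of \<open>N11\<close>.\<close>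
definition A :: "nat \<Rightarrow> (nat \<Rightarrow> bool) \<Rightarrow> (nat \<Rightarrow> bool) \<Rightarrow> (nat \<Rightarrow> ereal) \<Rightarrow> nat \<Rightarrow> nat set" where
  "A n z m y L = {j\<in>N11 n z m. card {k\<in>N11 n z m. rnk n y k > rnk n y j} < L}"

definition gam :: "nat \<Rightarrow> (nat \<Rightarrow> bool) \<Rightarrow> (nat \<Rightarrow> bool) \<Rightarrow> (nat \<Rightarrow> ereal) \<Rightarrow> real \<Rightarrow> real" where
  "gam n z m y \<kappa> = real_of_ereal (Max (y ` N11 n z m)) - real_of_ereal (Min (y ` N01 n z m)) + \<kappa>"

definition eta :: "nat \<Rightarrow> (nat \<Rightarrow> bool) \<Rightarrow> (nat \<Rightarrow> bool) \<Rightarrow> (nat \<Rightarrow> ereal) \<Rightarrow> nat \<Rightarrow> real \<Rightarrow> real \<Rightarrow> nat \<Rightarrow> real" where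
  "eta n z m y L c \<kappa> i = (if i \<in> A n z m y L then gam n z m y \<kappa> else c)"

end

theory Submission
  imports Defs
begin


lemma psi_le1: "psi i j a b \<le> 1" by (auto simp: psi_def)
lemma psi_eq: "psi i j a b = (if b < a \<or> (a = b \<and> j \<le> i) then 1 else 0)"
  by (auto simp: psi_def)

lemma psi_mono1: "v < v' \<or> (v = v' \<and> i \<le> i') \<Longrightarrow> psi i j v (u::ereal) \<le> psi i' j v' u"
  unfolding psi_eq by auto
lemma psi_anti2: "v < v' \<or> (v = v' \<and> i \<le> i') \<Longrightarrow> psi j i' u v' \<le> psi j i (u::ereal) v"
  unfolding psi_eq by auto

lemma rnk_card: "rnk n w i = card {j\<in>{1..n}. w j < w i \<or> (w j = w i \<and> j \<le> i)}"
proof -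
  have "rnk n w i = (\<Sum>j\<in>{1..n}. if w j < w i \<or> (w j = w i \<and> j \<le> i) then 1 else 0)"
    unfolding rnk_def psi_eq by (rule sum.cong) auto
  also have "\<dots> = card {j\<in>{1..n}. w j < w i \<or> (w j = w i \<and> j \<le> i)}"
    by (simp add: sum.inter_filter[symmetric])
  finally show ?thesis .
qed

lemma rnk_le: "w k < w i \<or> (w k = w i \<and> k \<le> i) \<Longrightarrow> rnk n w k \<le> rnk n (w::nat\<Rightarrow>ereal) i"
  unfolding rnk_card by (rule card_mono) auto

lemma rnk_less: "i \<in> {1..n} \<Longrightarrow> w k < w i \<or> (w k = w i \<and> k < i) \<Longrightarrow> rnk n w k < rnk n (w::nat\<Rightarrow>ereal) i"
  unfolding rnk_card by (rule psubset_card_mono) auto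

lemma rnk_inj: "inj_on (rnk n (w::nat\<Rightarrow>ereal)) {1..n}"
proof (rule inj_onI, rule ccontr)
  fix i k assume i: "i \<in> {1..n}" and k: "k \<in> {1..n}" and e: "rnk n w i = rnk n w k" and ne: "i \<noteq> k"
  have "w k < w i \<or> (w k = w i \<and> k < i) \<or> w i < w k \<or> (w i = w k \<and> i < k)"
    using ne by (metis linorder_neqE nat_neq_iff)
  then show False using rnk_less[OF i, of w k] rnk_less[OF k, of w i] e by auto
qed

lemma rnk_range: "i \<in> {1..n} \<Longrightarrow> rnk n w i \<in> {1..n}"
proof -
  assume i: "i \<in> {1..n}"
  have "card {j\<in>{1..n}. w j < w i \<or> (w j = w i \<and> j \<le> i)} \<le> card {1..n}"
    by (rule card_mono) auto
  moreover have "card {j\<in>{1..n}. w j < w i \<or> (w j = w i \<and> j \<le> i)} \<ge> 1"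
  proof -
    have "i \<in> {j\<in>{1..n}. w j < w i \<or> (w j = w i \<and> j \<le> i)}" using i by auto
    then have "0 < card {j\<in>{1..n}. w j < w i \<or> (w j = w i \<and> j \<le> i)}"
      by (subst card_gt_0_iff) auto
    then show ?thesis by linarith
  qed
  ultimately show ?thesis unfolding rnk_card by auto
qed

lemma rnk_image: "rnk n (w::nat\<Rightarrow>ereal) ` {1..n} = {1..n}"
  apply (rule card_subset_eq)
  using rnk_range apply auto[2]
  using card_image[OF rnk_inj, of n w] by simp

lemma rnk_order: "rnk n w i < rnk n w k \<Longrightarrow> w i < w k \<or> (w i = w k \<and> i \<le> (k::nat)) " for w :: "nat \<Rightarrow> ereal"
proof (rule ccontr)
  assume a: "rnk n w i < rnk n w k" and b: "\<not> (w i < w k \<or> (w i = w k \<and> i \<le> k))"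
  then have "w k < w i \<or> (w k = w i \<and> k \<le> i)" by auto
  then show False using rnk_le[of w k i n] a by auto
qed



lemma card_top:
  fixes N :: "nat set" and r :: "nat \<Rightarrow> nat"
  assumes fin: "finite N" and inj: "inj_on r N" and L: "L \<le> card N"
  shows "card {j\<in>N. card {k\<in>N. r j < r k} < L} = L"
proof -
  define p where "p j = card {k\<in>N. r j < r k}" for j
  have pinj: "inj_on p N"
  proof (rule inj_onI, rule ccontr)
    fix i k assume i: "i \<in> N" and k: "k \<in> N" and e: "p i = p k" and ne: "i \<noteq> k"
    have "r i \<noteq> r k" using inj i k ne by (meson inj_on_def)
    then have lt: "r i < r k \<or> r k < r i" by auto
    have "p k < p i" if "a \<in> N" "b \<in> N" "r a < r b" "i = a" "k = b" for a b
    proof -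
      have "{x\<in>N. r b < r x} \<subset> {x\<in>N. r a < r x}" using that by auto
      then show ?thesis unfolding p_def that by (simp add: fin psubset_card_mono)
    qed
    moreover have "p i < p k" if "a \<in> N" "b \<in> N" "r a < r b" "k = a" "i = b" for a b
    proof -
      have "{x\<in>N. r b < r x} \<subset> {x\<in>N. r a < r x}" using that by auto
      then show ?thesis unfolding p_def that by (simp add: fin psubset_card_mono)
    qed
    ultimately show False using lt e i k by fastforce
  qed
  have prange: "p ` N \<subseteq> {0..<card N}"
  proof
    fix x assume "x \<in> p ` N"
    then obtain j where j: "j \<in> N" "x = p j" by auto
    have "{k\<in>N. r j < r k} \<subset> N" using j by auto
    then show "x \<in> {0..<card N}" using j fin unfolding p_def by (simp add: psubset_card_mono)
  qed
  have pim: "p ` N = {0..<card N}"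
    by (rule card_subset_eq) (use prange card_image[OF pinj] in auto)
  have "p ` {j\<in>N. p j < L} = {x\<in>p ` N. x < L}" by auto
  also have "\<dots> = {0..<L}" using pim L by auto
  finally have "card (p ` {j\<in>N. p j < L}) = L" by simp
  moreover have "inj_on p {j\<in>N. p j < L}" using pinj by (rule inj_on_subset) auto
  ultimately show ?thesis unfolding p_def by (simp add: card_image)
qed

lemma sum_exch:
  fixes f :: "nat \<Rightarrow> real"
  assumes "finite X" "finite Y" "card X = card Y" "\<And>x y. x \<in> X \<Longrightarrow> y \<in> Y \<Longrightarrow> f x \<le> f y"
  shows "sum f X \<le> sum f Y"
proof (cases "X = {}")
  case True
  then have "Y = {}" using assms by auto
  then show ?thesis using True by simp
next
  case False
  define M where "M = Max (f ` X)"
  have "sum f X \<le> of_nat (card X) * M"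
    by (rule sum_bounded_above) (use assms(1) in \<open>auto simp: M_def\<close>)
  also have "\<dots> \<le> sum f Y"
  proof -
    have "of_nat (card Y) * M \<le> sum f Y"
    proof (rule sum_bounded_below)
      fix y assume y: "y \<in> Y"
      have "M \<in> f ` X" unfolding M_def using False assms(1) by (intro Max_in) auto
      then obtain x where "x \<in> X" "M = f x" by auto
      then show "M \<le> f y" using assms(4) y by auto
    qed
    then show ?thesis using assms(3) by simp
  qed
  finally show ?thesis .
qed

lemma exch:
  fixes N S :: "nat set" and r :: "nat \<Rightarrow> nat" and h F :: "nat \<Rightarrow> real" and M :: real
  assumes fin: "finite N" and inj: "inj_on r N" and L: "L \<le> card N"
    and SN: "S \<subseteq> N" and cS: "card S \<le> L"
    and hmono: "\<And>i k. i \<in> N \<Longrightarrow> k \<in> N \<Longrightarrow> r i < r k \<Longrightarrow> h i \<le> h k"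
    and hM: "\<And>i. i \<in> N \<Longrightarrow> M \<le> h i"
    and FS: "\<And>i. i \<in> S \<Longrightarrow> M \<le> F i"
    and FN: "\<And>i. i \<in> N \<Longrightarrow> i \<notin> S \<Longrightarrow> h i \<le> F i"
  shows "(\<Sum>i\<in>N. if i \<in> {j\<in>N. card {k\<in>N. r j < r k} < L} then M else h i) \<le> (\<Sum>i\<in>N. F i)"
proof -
  define A where "A = {j\<in>N. card {k\<in>N. r j < r k} < L}"
  have cA: "card A = L" unfolding A_def by (rule card_top[OF fin inj L])
  have AN: "A \<subseteq> N" unfolding A_def by auto
  define G where "G X = (\<Sum>i\<in>N. if i \<in> X then M else h i)" for X
  have G_alt: "G X = sum h N - sum (\<lambda>i. h i - M) X" if "X \<subseteq> N" for X
  proof -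
    have "G X = (\<Sum>i\<in>N. h i - (if i \<in> X then h i - M else 0))"
      unfolding G_def by (rule sum.cong) auto
    also have "\<dots> = sum h N - (\<Sum>i\<in>N. if i \<in> X then h i - M else 0)"
      by (simp add: sum_subtractf)
    also have "(\<Sum>i\<in>N. if i \<in> X then h i - M else 0) = sum (\<lambda>i. h i - M) X"
      using that fin by (simp add: sum.If_cases Int_absorb1 inf.absorb2)
    finally show ?thesis .
  qed
  have "G S \<le> sum F N" unfolding G_def
    by (rule sum_mono) (use FS FN in auto)
  obtain T where T: "T \<subseteq> N - S" "card T = L - card S"
  proof -
    have fS: "finite S" using finite_subset[OF SN fin] .
    have "card (N - S) = card N - card S" using card_Diff_subset[OF fS SN] .
    then have cNS: "card (N - S) \<ge> L - card S" using L by linarith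
    show ?thesis using obtain_subset_with_card_n[OF cNS] that by blast
  qed
  define S' where "S' = S \<union> T"
  have S'N: "S' \<subseteq> N" using T SN unfolding S'_def by auto
  have cS': "card S' = L"
  proof -
    have "finite S" "finite T" using fin SN T by (auto intro: finite_subset)
    moreover have "S \<inter> T = {}" using T by auto
    ultimately show ?thesis unfolding S'_def using T cS by (simp add: card_Un_disjoint)
  qed
  have "G S' \<le> G S" unfolding G_def
    by (rule sum_mono) (use hM S'_def in auto)
  have key: "sum (\<lambda>i. h i - M) S' \<le> sum (\<lambda>i. h i - M) A"
  proof -
    have finS': "finite S'" and finA: "finite A" using S'N AN fin by (auto intro: finite_subset)
    have e1: "sum (\<lambda>i. h i - M) S' = sum (\<lambda>i. h i - M) (S' \<inter> A) + sum (\<lambda>i. h i - M) (S' - A)"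
      by (rule sum.Int_Diff[OF finS'])
    have e2: "sum (\<lambda>i. h i - M) A = sum (\<lambda>i. h i - M) (S' \<inter> A) + sum (\<lambda>i. h i - M) (A - S')"
      using sum.Int_Diff[OF finA, of _ S'] by (simp add: Int_commute)
    have "sum (\<lambda>i. h i - M) (S' - A) \<le> sum (\<lambda>i. h i - M) (A - S')"
    proof (rule sum_exch)
      show "finite (S' - A)" "finite (A - S')" using finS' finA by auto
      show "card (S' - A) = card (A - S')"
        using card_Diff_subset_Int[of S' A] card_Diff_subset_Int[of A S'] finS' finA cS' cA by (simp add: Int_commute)
      fix x y assume x: "x \<in> S' - A" and yy: "y \<in> A - S'"
      have xN: "x \<in> N" and yN: "y \<in> N" using x yy S'N AN by auto
      have px: "card {k\<in>N. r x < r k} \<ge> L" using x xN unfolding A_def by auto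
      have py: "card {k\<in>N. r y < r k} < L" using yy unfolding A_def by auto
      have "r x < r y"
      proof (rule ccontr)
        assume "\<not> r x < r y"
        then have "{k\<in>N. r x < r k} \<subseteq> {k\<in>N. r y < r k}" by auto
        then have "card {k\<in>N. r x < r k} \<le> card {k\<in>N. r y < r k}" using fin by (simp add: card_mono)
        then show False using px py by simp
      qed
      then show "h x - M \<le> h y - M" using hmono xN yN by simp
    qed
    then show ?thesis using e1 e2 by simp
  qed
  have "G A \<le> G S'" using G_alt[OF AN] G_alt[OF S'N] key by simp
  then show ?thesis using \<open>G S' \<le> G S\<close> \<open>G S \<le> sum F N\<close> unfolding G_def A_def by simp
qed



lemma tel: "\<phi> r = \<phi> 0 + (\<Sum>s\<in>{1..r}. \<phi> s - \<phi> (s - 1))" for \<phi> :: "nat \<Rightarrow> real"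
  by (induction r) auto

lemma abel:
  fixes \<phi> :: "nat \<Rightarrow> real" and f :: "nat \<Rightarrow> nat"
  assumes fin: "finite T" and bd: "\<And>i. i \<in> T \<Longrightarrow> f i \<le> K"
  shows "(\<Sum>i\<in>T. \<phi> (f i)) = card T * \<phi> 0 + (\<Sum>s\<in>{1..K}. (\<phi> s - \<phi> (s - 1)) * card {i\<in>T. s \<le> f i})"
proof -
  have cut: "(\<Sum>s\<in>{1..r}. \<phi> s - \<phi> (s - 1)) = (\<Sum>s\<in>{1..K}. if s \<le> r then \<phi> s - \<phi> (s - 1) else 0)"
    if "r \<le> K" for r
  proof -
    have "{s\<in>{1..K}. s \<le> r} = {1..r}" using that by auto
    then show ?thesis by (simp add: sum.inter_filter[symmetric])
  qed
  have "(\<Sum>i\<in>T. \<phi> (f i)) = (\<Sum>i\<in>T. \<phi> 0 + (\<Sum>s\<in>{1..K}. if s \<le> f i then \<phi> s - \<phi> (s - 1) else 0))"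
  proof (rule sum.cong)
    fix i assume i: "i \<in> T"
    show "\<phi> (f i) = \<phi> 0 + (\<Sum>s\<in>{1..K}. if s \<le> f i then \<phi> s - \<phi> (s - 1) else 0)"
      using tel[of \<phi> "f i"] cut[OF bd[OF i]] by linarith
  qed simp
  also have "\<dots> = card T * \<phi> 0 + (\<Sum>s\<in>{1..K}. \<Sum>i\<in>T. if s \<le> f i then \<phi> s - \<phi> (s - 1) else 0)"
    by (simp add: sum.distrib sum.swap[of _ T])
  also have "(\<Sum>s\<in>{1..K}. \<Sum>i\<in>T. if s \<le> f i then \<phi> s - \<phi> (s - 1) else 0)
     = (\<Sum>s\<in>{1..K}. (\<phi> s - \<phi> (s - 1)) * card {i\<in>T. s \<le> f i})"
    by (rule sum.cong) (simp_all add: fin sum.inter_filter[symmetric])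
  finally show ?thesis .
qed

lemma major:
  fixes \<phi> :: "nat \<Rightarrow> real" and f g :: "nat \<Rightarrow> nat"
  assumes fin: "finite T" and bd: "\<And>i. i \<in> T \<Longrightarrow> f i \<le> K" "\<And>i. i \<in> T \<Longrightarrow> g i \<le> K"
    and mono: "mono \<phi>"
    and cnt: "\<And>s. s \<in> {1..K} \<Longrightarrow> card {i\<in>T. s \<le> f i} \<le> card {i\<in>T. s \<le> g i}"
  shows "(\<Sum>i\<in>T. \<phi> (f i)) \<le> (\<Sum>i\<in>T. \<phi> (g i))"
proof -
  have "(\<Sum>s\<in>{1..K}. (\<phi> s - \<phi> (s - 1)) * card {i\<in>T. s \<le> f i})
     \<le> (\<Sum>s\<in>{1..K}. (\<phi> s - \<phi> (s - 1)) * card {i\<in>T. s \<le> g i})"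
  proof (rule sum_mono)
    fix s assume s: "s \<in> {1..K}"
    have "\<phi> (s - 1) \<le> \<phi> s" using mono by (simp add: monoD)
    then show "(\<phi> s - \<phi> (s - 1)) * card {i\<in>T. s \<le> f i} \<le> (\<phi> s - \<phi> (s - 1)) * card {i\<in>T. s \<le> g i}"
      using cnt[OF s] by (simp add: mult_left_mono)
  qed
  then show ?thesis using abel[where f=f and \<phi>=\<phi> and K=K, OF fin bd(1)] abel[where f=g and \<phi>=\<phi> and K=K, OF fin bd(2)] by simp
qed

lemma t_rank_alt: "t_rank n \<phi> z w = (\<Sum>i\<in>{i\<in>{1..n}. z i}. \<phi> (rnk n w i))"
  unfolding t_rank_def sum.inter_filter[OF finite_atLeastAtMost] by (rule sum.cong) auto

lemma t_mw_alt: "t_mw n \<phi> z w = (\<Sum>i\<in>{i\<in>{1..n}. z i}. \<phi> (\<Sum>j\<in>{j\<in>{1..n}. \<not> z j}. psi i j (w i) (w j)))"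
  unfolding t_mw_def sum.inter_filter[OF finite_atLeastAtMost]
  by (rule sum.cong) (auto intro!: arg_cong[where f=\<phi>] sum.cong)

lemma R1:
  fixes w w' :: "nat \<Rightarrow> ereal"
  assumes mono: "mono \<phi>"
    and eqC: "\<And>j. j \<in> {1..n} \<Longrightarrow> \<not> z j \<Longrightarrow> w j = w' j"
    and cmp: "\<And>j. j \<in> {1..n} \<Longrightarrow> \<not> z j \<Longrightarrow>
       (\<Sum>i\<in>{i\<in>{1..n}. z i}. psi j i (w' j) (w' i)) \<le> (\<Sum>i\<in>{i\<in>{1..n}. z i}. psi j i (w j) (w i))"
  shows "t_rank n \<phi> z w \<le> t_rank n \<phi> z w'"
proof -
  define T where "T = {i\<in>{1..n}. z i}"
  define C where "C = {i\<in>{1..n}. \<not> z i}"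
  have TC: "T \<union> C = {1..n}" "T \<inter> C = {}" unfolding T_def C_def by auto
  have finT: "finite T" and finC: "finite C" unfolding T_def C_def by auto
  have rC: "rnk n w' j \<le> rnk n w j" if j: "j \<in> C" for j
  proof -
    have split: "rnk n v j = (\<Sum>i\<in>T. psi j i (v j) (v i)) + (\<Sum>i\<in>C. psi j i (v j) (v i))" for v
      unfolding rnk_def using TC finT finC by (metis sum.union_disjoint)
    have "(\<Sum>i\<in>C. psi j i (w j) (w i)) = (\<Sum>i\<in>C. psi j i (w' j) (w' i))"
      by (rule sum.cong) (use eqC j in \<open>auto simp: C_def\<close>)
    then show ?thesis using split[of w] split[of w'] cmp j unfolding C_def T_def by simp
  qed
  have tot: "card {i\<in>{1..n}. s \<le> rnk n v i} = card {x\<in>{1..n}. s \<le> x}" for v :: "nat \<Rightarrow> ereal" and s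
  proof -
    have "rnk n v ` {i\<in>{1..n}. s \<le> rnk n v i} = {x\<in>rnk n v ` {1..n}. s \<le> x}" by auto
    also have "\<dots> = {x\<in>{1..n}. s \<le> x}" using rnk_image by simp
    finally show ?thesis using inj_on_subset[OF rnk_inj, of "{i\<in>{1..n}. s \<le> rnk n v i}" n v]
      by (metis (no_types, lifting) card_image mem_Collect_eq subsetI)
  qed
  have splitc: "card {i\<in>{1..n}. s \<le> rnk n v i} = card {i\<in>T. s \<le> rnk n v i} + card {i\<in>C. s \<le> rnk n v i}"
    for v :: "nat \<Rightarrow> ereal" and s
  proof -
    have "{i\<in>{1..n}. s \<le> rnk n v i} = {i\<in>T. s \<le> rnk n v i} \<union> {i\<in>C. s \<le> rnk n v i}" using TC by auto
    moreover have "{i\<in>T. s \<le> rnk n v i} \<inter> {i\<in>C. s \<le> rnk n v i} = {}" using TC by auto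
    ultimately show ?thesis using finT finC by (simp add: card_Un_disjoint)
  qed
  have "(\<Sum>i\<in>T. \<phi> (rnk n w i)) \<le> (\<Sum>i\<in>T. \<phi> (rnk n w' i))"
  proof (rule major[OF finT _ _ mono, of _ n])
    show "\<And>i. i \<in> T \<Longrightarrow> rnk n w i \<le> n" "\<And>i. i \<in> T \<Longrightarrow> rnk n w' i \<le> n"
      using rnk_range unfolding T_def by fastforce+
    fix s
    have "card {i\<in>C. s \<le> rnk n w' i} \<le> card {i\<in>C. s \<le> rnk n w i}"
      by (rule card_mono) (use finC rC in \<open>auto intro: le_trans\<close>)
    then show "card {i\<in>T. s \<le> rnk n w i} \<le> card {i\<in>T. s \<le> rnk n w' i}"
      using splitc[of s w] splitc[of s w'] tot[of s w] tot[of s w'] by linarith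
  qed
  then show ?thesis unfolding t_rank_alt T_def .
qed



lemma psi_mono_v: "v \<le> v' \<Longrightarrow> psi i j v (u::ereal) \<le> psi i j v' u"
  using psi_mono1[of v v' i i j u] by (cases "v = v'") auto
lemma psi_anti_v: "v \<le> v' \<Longrightarrow> psi j i u v' \<le> psi j i (u::ereal) v"
  using psi_anti2[of v v' i i j u] by (cases "v = v'") auto

theorem lemma3:
  fixes n L :: nat and z m :: "nat \<Rightarrow> bool" and y :: "nat \<Rightarrow> ereal"
    and \<phi> :: "nat \<Rightarrow> real" and c \<kappa> :: real
  assumes phi_mono: "mono \<phi>"
    and y_fin: "\<And>i. i \<in> {1..n} \<Longrightarrow> m i \<Longrightarrow> y i \<noteq> \<infinity> \<and> y i \<noteq> -\<infinity>"
    and y_inf: "\<And>i. i \<in> {1..n} \<Longrightarrow> \<not> m i \<Longrightarrow> y i = \<infinity> \<or> y i = -\<infinity>"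
    and L_le: "L \<le> card (N11 n z m)"
    and kappa: "\<kappa> > 0"
    and ctrl_ne: "N01 n z m \<noteq> {}"
  shows "(INF \<delta>\<in>H n z m L c. t_rank n \<phi> z (shift z m y \<delta>))
           = t_rank n \<phi> z (shift z m y (eta n z m y L c \<kappa>))
       \<and> (INF \<delta>\<in>H n z m L c. t_mw n \<phi> z (shift z m y \<delta>))
           = t_mw n \<phi> z (shift z m y (eta n z m y L c \<kappa>))"
proof -
  define N where "N = N11 n z m"
  define T where "T = {i\<in>{1..n}. z i}"
  define C where "C = {i\<in>{1..n}. \<not> z i}"
  define AA where "AA = A n z m y L"
  define \<gamma> where "\<gamma> = gam n z m y \<kappa>"
  define \<eta> where "\<eta> = eta n z m y L c \<kappa>"
  define Y where "Y i = real_of_ereal (y i)" for i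
  have finN: "finite N" and finT: "finite T" and finC: "finite C"
    unfolding N_def N11_def T_def C_def by auto
  have NT: "N \<subseteq> T" unfolding N_def N11_def T_def by auto
  have Nn: "N \<subseteq> {1..n}" unfolding N_def N11_def by auto
  have yN: "y i = ereal (Y i)" if "i \<in> N" for i
    using that y_fin[of i] unfolding N_def N11_def Y_def by (cases "y i") auto
  have sh_N: "shift z m y d i = ereal (Y i - d i)" if "i \<in> N" for d i
    using that yN[OF that] unfolding shift_def N_def N11_def by auto
  have sh_T: "shift z m y d i = y i" if "i \<in> T - N" for d i
    using that unfolding shift_def N_def N11_def T_def by auto
  have sh_C: "shift z m y d i = y i" if "i \<in> C" for d i
    using that unfolding shift_def C_def by auto
  have AA_eq: "AA = {j\<in>N. card {k\<in>N. rnk n y j < rnk n y k} < L}"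
    unfolding AA_def A_def N_def by simp
  have eta_N: "\<eta> i = (if i \<in> AA then \<gamma> else c)" for i
    unfolding \<eta>_def eta_def AA_def \<gamma>_def by simp
  have injN: "inj_on (rnk n y) N" using rnk_inj Nn by (rule inj_on_subset)
  have cardAA: "card AA = L" unfolding AA_eq by (rule card_top[OF finN injN]) (use L_le N_def in simp)
  have gam_lt: "ereal (Y i - \<gamma>) < y j" if i: "i \<in> N" and j: "j \<in> N01 n z m" for i j
  proof -
    have finN01: "finite (N01 n z m)" unfolding N01_def by auto
    have "Max (y ` N) \<in> y ` N" using i finN by (intro Max_in) auto
    then obtain k where k: "k \<in> N" "Max (y ` N) = y k" by auto
    have "Min (y ` N01 n z m) \<in> y ` N01 n z m" using j finN01 by (intro Min_in) auto
    then obtain l where l: "l \<in> N01 n z m" "Min (y ` N01 n z m) = y l" by auto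
    have yl: "y l = ereal (Y l)" and yj: "y j = ereal (Y j)"
      using l j y_fin[of l] y_fin[of j] unfolding N01_def Y_def by (cases "y l"; cases "y j"; auto)+
    have "y i \<le> y k" using k i finN by (metis Max_ge finite_imageI image_eqI)
    then have ik: "Y i \<le> Y k" using yN[OF i] yN[OF k(1)] by simp
    have "y l \<le> y j" using l j finN01 by (metis Min_le finite_imageI image_eqI)
    then have lj: "Y l \<le> Y j" using yl yj by simp
    have g: "\<gamma> = Y k - Y l + \<kappa>" unfolding \<gamma>_def gam_def N_def[symmetric] k(2) l(2) Y_def by simp
    show ?thesis using ik lj g kappa yj by simp
  qed
  have ctrl_cases: "y j = -\<infinity> \<or> y j = \<infinity> \<or> j \<in> N01 n z m" if "j \<in> C" for j
    using that y_inf[of j] unfolding C_def N01_def by auto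
  have b1: "psi i j (ereal (Y i - \<gamma>)) (y j) = (if y j = -\<infinity> then 1 else 0)" if "i \<in> N" "j \<in> C" for i j
    using ctrl_cases[OF that(2)] gam_lt[OF that(1), of j] unfolding psi_eq by auto
  have b2: "psi j i (y j) (ereal (Y i - \<gamma>)) = (if y j = -\<infinity> then 0 else 1)" if "i \<in> N" "j \<in> C" for i j
    using ctrl_cases[OF that(2)] gam_lt[OF that(1), of j] unfolding psi_eq by auto
  have a1: "(if y j = -\<infinity> then 1 else 0) \<le> psi i j (ereal v) (y j)" for i j v
    unfolding psi_eq by auto
  have a2: "psi j i (y j) (ereal v) \<le> (if y j = -\<infinity> then 0 else 1)" for i j v
    unfolding psi_eq by auto
  have ord: "ereal (Y i - c) < ereal (Y k - c) \<or> (ereal (Y i - c) = ereal (Y k - c) \<and> i \<le> k)"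
    if "i \<in> N" "k \<in> N" "rnk n y i < rnk n y k" for i k
    using rnk_order[OF that(3)] yN[OF that(1)] yN[OF that(2)] by auto
  have etaH: "\<eta> \<in> H n z m L c"
  proof -
    have "{i\<in>N. c < \<eta> i} \<subseteq> AA" using eta_N by auto
    then have "card {i\<in>N. c < \<eta> i} \<le> L" using cardAA finN AA_eq
      by (metis (no_types, lifting) card_mono finite_subset mem_Collect_eq subsetI)
    then show ?thesis unfolding H_def N_def by simp
  qed
  have mainR: "t_rank n \<phi> z (shift z m y \<eta>) \<le> t_rank n \<phi> z (shift z m y \<delta>)"
   and mainM: "t_mw n \<phi> z (shift z m y \<eta>) \<le> t_mw n \<phi> z (shift z m y \<delta>)"
    if dH: "\<delta> \<in> H n z m L c" for \<delta>
  proof -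
    define S where "S = {i\<in>N. c < \<delta> i}"
    have SN: "S \<subseteq> N" and cS: "card S \<le> L" using dH unfolding S_def H_def N_def by auto
    let ?wd = "shift z m y \<delta>" and ?we = "shift z m y \<eta>"
    have TNS: "sum f T = sum f N + sum f (T - N)" for f :: "nat \<Rightarrow> 'b::comm_monoid_add"
      using NT finT by (metis add.commute sum.subset_diff)
    show "t_rank n \<phi> z ?we \<le> t_rank n \<phi> z ?wd"
    proof (rule R1[OF phi_mono])
      show "\<And>j. j \<in> {1..n} \<Longrightarrow> \<not> z j \<Longrightarrow> ?we j = ?wd j" unfolding shift_def by auto
      fix j assume jn: "j \<in> {1..n}" and jz: "\<not> z j"
      have j: "j \<in> C" using jn jz unfolding C_def by auto
      define M where "M = - (if y j = -\<infinity> then 0 else 1 :: real)"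
      define h where "h i = - real (psi j i (y j) (ereal (Y i - c)))" for i
      define F where "F i = - real (psi j i (y j) (?wd i))" for i
      have ex: "(\<Sum>i\<in>N. if i \<in> {j\<in>N. card {k\<in>N. rnk n y j < rnk n y k} < L} then M else h i) \<le> (\<Sum>i\<in>N. F i)"
      proof (rule exch[OF finN injN _ SN cS])
        show "L \<le> card N" using L_le N_def by simp
        show "h i \<le> h k" if "i \<in> N" "k \<in> N" "rnk n y i < rnk n y k" for i k
          using psi_anti2[OF ord[OF that], of j "y j"] unfolding h_def by simp
        show "M \<le> h i" if "i \<in> N" for i
          using a2[of j i "Y i - c"] unfolding M_def h_def by (auto split: if_splits)
        show "M \<le> F i" if "i \<in> S" for i
          using a2[of j i "Y i - \<delta> i"] sh_N[of i \<delta>] that SN unfolding M_def F_def by (auto split: if_splits)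
        show "h i \<le> F i" if "i \<in> N" "i \<notin> S" for i
        proof -
          have "\<delta> i \<le> c" using that unfolding S_def by auto
          then have "ereal (Y i - c) \<le> ereal (Y i - \<delta> i)" by simp
          then show ?thesis using psi_anti_v[of "ereal (Y i - c)" "ereal (Y i - \<delta> i)" j i "y j"]
            sh_N[OF that(1), of \<delta>] unfolding h_def F_def by simp
        qed
      qed
      have lhs: "(\<Sum>i\<in>N. if i \<in> {j\<in>N. card {k\<in>N. rnk n y j < rnk n y k} < L} then M else h i)
          = (\<Sum>i\<in>N. - real (psi j i (y j) (?we i)))"
      proof (rule sum.cong[OF refl])
        fix i assume i: "i \<in> N"
        show "(if i \<in> {j\<in>N. card {k\<in>N. rnk n y j < rnk n y k} < L} then M else h i) = - real (psi j i (y j) (?we i))"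
          using b2[OF i j] sh_N[OF i, of \<eta>] eta_N[of i] unfolding AA_eq[symmetric] M_def h_def
          by auto
      qed
      have "(\<Sum>i\<in>N. real (psi j i (y j) (?wd i))) \<le> (\<Sum>i\<in>N. real (psi j i (y j) (?we i)))"
        using ex lhs unfolding F_def by (simp add: sum_negf)
      then have nN: "(\<Sum>i\<in>N. psi j i (y j) (?wd i)) \<le> (\<Sum>i\<in>N. psi j i (y j) (?we i))"
        by (simp only: of_nat_sum[symmetric] of_nat_le_iff)
      have nTN: "(\<Sum>i\<in>T-N. psi j i (y j) (?wd i)) = (\<Sum>i\<in>T-N. psi j i (y j) (?we i))"
        by (rule sum.cong) (auto simp: sh_T)
      show "(\<Sum>i\<in>{i\<in>{1..n}. z i}. psi j i (?wd j) (?wd i)) \<le> (\<Sum>i\<in>{i\<in>{1..n}. z i}. psi j i (?we j) (?we i))"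
        using nN nTN TNS[of "\<lambda>i. psi j i (y j) (?wd i)"] TNS[of "\<lambda>i. psi j i (y j) (?we i)"]
          sh_C[OF j, of \<delta>] sh_C[OF j, of \<eta>] unfolding T_def by simp
    qed
    define cnt where "cnt i v = (\<Sum>j\<in>C. psi i j v (y j))" for i v
    have mw: "t_mw n \<phi> z (shift z m y d) = (\<Sum>i\<in>T. \<phi> (cnt i (shift z m y d i)))" for d
      unfolding t_mw_alt T_def[symmetric] C_def[symmetric] cnt_def
      by (intro sum.cong refl arg_cong[where f=\<phi>]) (simp add: sh_C)
    define K0 where "K0 = (\<Sum>j\<in>C. if y j = -\<infinity> then 1 else (0::nat))"
    have K0le: "K0 \<le> cnt i (ereal v)" for i v
      unfolding K0_def cnt_def by (rule sum_mono) (rule a1)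
    have K0eq: "cnt i (ereal (Y i - \<gamma>)) = K0" if "i \<in> N" for i
      unfolding K0_def cnt_def by (rule sum.cong) (use b1[OF that] in auto)
    define M where "M = \<phi> K0"
    define h where "h i = \<phi> (cnt i (ereal (Y i - c)))" for i
    define F where "F i = \<phi> (cnt i (?wd i))" for i
    have ex: "(\<Sum>i\<in>N. if i \<in> {j\<in>N. card {k\<in>N. rnk n y j < rnk n y k} < L} then M else h i) \<le> (\<Sum>i\<in>N. F i)"
    proof (rule exch[OF finN injN _ SN cS])
      show "L \<le> card N" using L_le N_def by simp
      show "h i \<le> h k" if "i \<in> N" "k \<in> N" "rnk n y i < rnk n y k" for i k
      proof -
        have "cnt i (ereal (Y i - c)) \<le> cnt k (ereal (Y k - c))"
          unfolding cnt_def by (rule sum_mono) (rule psi_mono1[OF ord[OF that]])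
        then show ?thesis unfolding h_def using phi_mono by (simp add: monoD)
      qed
      show "M \<le> h i" if "i \<in> N" for i
        unfolding M_def h_def using phi_mono K0le by (simp add: monoD)
      show "M \<le> F i" if "i \<in> S" for i
        unfolding M_def F_def using phi_mono K0le sh_N[of i \<delta>] that SN by (auto simp: monoD)
      show "h i \<le> F i" if "i \<in> N" "i \<notin> S" for i
      proof -
        have "\<delta> i \<le> c" using that unfolding S_def by auto
        then have "ereal (Y i - \<delta> i) \<ge> ereal (Y i - c)" by simp
        then have "cnt i (ereal (Y i - c)) \<le> cnt i (ereal (Y i - \<delta> i))"
          unfolding cnt_def by (intro sum_mono psi_mono_v)
        then show ?thesis unfolding h_def F_def using sh_N[OF that(1), of \<delta>] phi_mono by (simp add: monoD)
      qed
    qed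
    have lhs: "(\<Sum>i\<in>N. if i \<in> {j\<in>N. card {k\<in>N. rnk n y j < rnk n y k} < L} then M else h i)
        = (\<Sum>i\<in>N. \<phi> (cnt i (?we i)))"
    proof (rule sum.cong[OF refl])
      fix i assume i: "i \<in> N"
      show "(if i \<in> {j\<in>N. card {k\<in>N. rnk n y j < rnk n y k} < L} then M else h i) = \<phi> (cnt i (?we i))"
        using K0eq[OF i] sh_N[OF i, of \<eta>] eta_N[of i] unfolding AA_eq[symmetric] M_def h_def
        by auto
    qed
    have eTN: "(\<Sum>i\<in>T-N. \<phi> (cnt i (?we i))) = (\<Sum>i\<in>T-N. \<phi> (cnt i (?wd i)))"
      by (rule sum.cong) (auto simp: sh_T)
    show "t_mw n \<phi> z ?we \<le> t_mw n \<phi> z ?wd"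
      unfolding mw using ex lhs eTN TNS[of "\<lambda>i. \<phi> (cnt i (?we i))"] TNS[of "\<lambda>i. \<phi> (cnt i (?wd i))"]
      unfolding F_def by simp
  qed
  have inf_eq: "(INF \<delta>\<in>H n z m L c. f \<delta>) = f \<eta>" if "\<And>\<delta>. \<delta> \<in> H n z m L c \<Longrightarrow> f \<eta> \<le> f \<delta>"
    for f :: "(nat \<Rightarrow> real) \<Rightarrow> real"
    by (rule cInf_eq_minimum) (use etaH that in auto)
  show ?thesis
    using inf_eq[of "\<lambda>\<delta>. t_rank n \<phi> z (shift z m y \<delta>)", OF mainR]
      inf_eq[of "\<lambda>\<delta>. t_mw n \<phi> z (shift z m y \<delta>)", OF mainM]
    unfolding \<eta>_def by simp
qed


end
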